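(* Let $K\ge 1$ be an integer, let $\lambda_1\ge\lambda_2\ge\cdots\ge\lambda_K>0$, $\Psi>0$, $r_{min}\ge 0$ be real numbers. For $\rho=(\rho_1,\dots,\rho_K)\in[0,\infty)^K$ define $$r_i^U(\rho)=\log_2\!\left(1+\frac{\rho_i\lambda_i}{\sum_{j=1}^{i-1}\rho_j\lambda_i+\Psi}\right),\qquad i=1,\dots,K.$$ Define $\rho_{i,min}$ recursively by $\rho_{i,min}=(2^{r_{min}}-1)\big(\sum_{j=1}^{i-1}\rho_{j,min}+\Psi/\lambda_i\big)$ (so that user $i$ gets rate exactly $r_{min}$ when every user $j$ is allocated $\rho_{j,min}$), and let $\rho_{sum}^{min}=\sum_{i=1}^K\rho_{i,min}$. For an allocation $\rho$ write $\triangle\rho_i=\rho_i-\rho_{i,min}$ and $$\rho_i^e=\Big(\triangle\rho_i-(2^{r_{min}}-1)\sum_{j=1}^{i-1}\triangle\rho_j\Big)2^{(K-i)r_{min}}$$ (the transformed excess power of user $i$). Let $\rho_U\ge\rho_{sum}^{min}$. Then, over all $\rho\in[0,\infty)^K$ with $\sum_{i=1}^K\rho_i=\rho_U$ and $r_i^U(\rho)\ge r_{min}$ for all $i$, the sum rate $\sum_{i=1}^K r_i^U(\rho)$ is maximized by allocating all the excess power to user $1$, i.e. by the allocation with $\rho_1^e=\rho_U-\rho_{sum}^{min}$ and $\rho_i^e=0$ for $i\ge 2$, and the maximum value is $$\sum_{i=1}^K r_i^U=Kr_{min}+\triangle r_1^U=Kr_{min}+\log_2\!\left(1+\frac{(\rho_U-\rho_{sum}^{min})\lambda_1}{\Psi\,2^{Kr_{min}}}\right),$$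 where $\triangle r_i^U=r_i^U(\rho)-r_{min}$ (so $\triangle r_i^U=0$ for $i\ge2$ at the optimum).
   Context: Setting: NOMA downlink with $K$ users decoded by successive interference cancellation; $\rho_i$ is the transmit SNR allocated to user $i$, $\lambda_i$ its estimated channel gain (users indexed from strongest to weakest channel), $\Psi>0$ a constant effective noise term, $r_{min}$ the minimum required unicast rate per user, $\rho_U$ the total unicast SNR. Empty sums are zero. *)

theory Defs
  imports Complex_Main
begin

text \<open>Users are indexed 1..K (strongest to weakest); allocations are functions nat => real,
only the values at indices 1..K matter.\<close>

definition rU :: "(nat \<Rightarrow> real) \<Rightarrow> real \<Rightarrow> (nat \<Rightarrow> real) \<Rightarrow> nat \<Rightarrow> real" where
  "rU lam Psi rho i =
     log 2 (1 + rho i * lam i / ((\<Sum>j\<in>{1..<i}. rho j * lam i) + Psi))"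

definition excess :: "nat \<Rightarrow> real \<Rightarrow> (nat \<Rightarrow> real) \<Rightarrow> (nat \<Rightarrow> real) \<Rightarrow> nat \<Rightarrow> real" where
  "excess K rmin rhomin rho i =
     ((rho i - rhomin i) - (2 powr rmin - 1) * (\<Sum>j\<in>{1..<i}. rho j - rhomin j))
       * 2 powr ((real K - real i) * rmin)"

definition feasible :: "nat \<Rightarrow> (nat \<Rightarrow> real) \<Rightarrow> real \<Rightarrow> real \<Rightarrow> real \<Rightarrow> (nat \<Rightarrow> real) \<Rightarrow> bool" where
  "feasible K lam Psi rmin rhoU rho \<longleftrightarrow>
     (\<forall>i\<in>{1..K}. rho i \<ge> 0) \<and> (\<Sum>i\<in>{1..K}. rho i) = rhoU \<and>
     (\<forall>i\<in>{1..K}. rU lam Psi rho i \<ge> rmin)"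

end

theory Submission
  imports Defs
begin


lemma rate_eq:
  assumes "lam i > 0" "Psi > 0" "\<forall>j\<in>{1..<i}. rho j \<ge> 0" "rho i \<ge> 0"
  shows "rU lam Psi rho i = log 2 ((\<Sum>j\<in>{1..<i}. rho j) + rho i + Psi / lam i)
           - log 2 ((\<Sum>j\<in>{1..<i}. rho j) + Psi / lam i)"
proof -
  define s where "s = (\<Sum>j\<in>{1..<i}. rho j)"
  have s0: "s \<ge> 0" unfolding s_def using assms(3) by (intro sum_nonneg) auto
  have N0: "Psi / lam i > 0" using assms by simp
  have "(\<Sum>j\<in>{1..<i}. rho j * lam i) = s * lam i" unfolding s_def by (simp add: sum_distrib_right)
  hence "rU lam Psi rho i = log 2 (1 + rho i * lam i / (s * lam i + Psi))" by (simp add: rU_def)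
  also have "1 + rho i * lam i / (s * lam i + Psi) = (s + rho i + Psi / lam i) / (s + Psi / lam i)"
  proof -
    have "s * lam i + Psi > 0" using assms s0 by (simp add: add_nonneg_pos)
    have e1: "s + rho i + Psi / lam i = (s * lam i + rho i * lam i + Psi) / lam i"
      using assms by (simp add: field_simps)
    have e2: "s + Psi / lam i = (s * lam i + Psi) / lam i"
      using assms by (simp add: field_simps)
    have "(s + rho i + Psi / lam i) / (s + Psi / lam i) = (s * lam i + rho i * lam i + Psi) / (s * lam i + Psi)"
      unfolding e1 e2 using assms by simp
    also have "\<dots> = 1 + rho i * lam i / (s * lam i + Psi)"
      using \<open>s * lam i + Psi > 0\<close> by (simp add: field_simps)
    finally show ?thesis by simp
  qed
  also have "log 2 \<dots> = log 2 (s + rho i + Psi / lam i) - log 2 (s + Psi / lam i)"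
  proof (rule log_divide_pos)
    show "s + rho i + Psi / lam i > 0" using s0 N0 assms by linarith
    show "s + Psi / lam i > 0" using s0 N0 by linarith
  qed
  finally show ?thesis unfolding s_def .
qed

lemma telescope:
  fixes A B :: "nat \<Rightarrow> real"
  shows "K \<ge> 1 \<Longrightarrow> (\<Sum>i\<in>{1..K}. A i - B i) = A K - B 1 + (\<Sum>i\<in>{1..<K}. A i - B (Suc i))"
proof (induction K)
  case 0 then show ?case by simp
next
  case (Suc K)
  show ?case
  proof (cases "K = 0")
    case True then show ?thesis by simp
  next
    case False
    then have "K \<ge> 1" by simp
    with Suc.IH have IH: "(\<Sum>i\<in>{1..K}. A i - B i) = A K - B 1 + (\<Sum>i\<in>{1..<K}. A i - B (Suc i))" .
    have "(\<Sum>i\<in>{1..Suc K}. A i - B i) = (\<Sum>i\<in>{1..K}. A i - B i) + (A (Suc K) - B (Suc K))"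
      by simp
    moreover have "(\<Sum>i\<in>{1..<Suc K}. A i - B (Suc i)) = (\<Sum>i\<in>{1..<K}. A i - B (Suc i)) + (A K - B (Suc K))"
      using \<open>K \<ge> 1\<close> by (subst sum.atLeastLessThan_Suc) auto
    ultimately show ?thesis using IH by linarith
  qed
qed

lemma g_mono:
  fixes x y N1 N2 :: real
  assumes "0 \<le> x" "x \<le> y" "0 < N1" "N1 \<le> N2"
  shows "log 2 (x + N1) - log 2 (x + N2) \<le> log 2 (y + N1) - log 2 (y + N2)"
proof -
  have "(x + N1) * (y + N2) \<le> (y + N1) * (x + N2)"
  proof -
    have "(y + N1) * (x + N2) - (x + N1) * (y + N2) = (N2 - N1) * (y - x)" by algebra
    moreover have "(N2 - N1) * (y - x) \<ge> 0" using assms by simp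
    ultimately show ?thesis by linarith
  qed
  hence "log 2 ((x + N1) * (y + N2)) \<le> log 2 ((y + N1) * (x + N2))"
    using assms by (intro log_mono) auto
  hence "log 2 (x + N1) + log 2 (y + N2) \<le> log 2 (y + N1) + log 2 (x + N2)"
    using assms by (simp add: log_mult_pos)
  thus ?thesis by linarith
qed



lemma pow_eq:
  fixes rmin :: real
  shows "2 powr (real n * rmin) = (2 powr rmin) ^ n"
proof -
  have "2 powr (real n * rmin) = (2 powr rmin) powr real n"
    by (simp add: powr_powr mult.commute)
  also have "\<dots> = (2 powr rmin) ^ n" by (simp add: powr_realpow)
  finally show ?thesis .
qed

lemma opt:
  fixes K :: nat and lam rhomin rho :: "nat \<Rightarrow> real" and Psi rmin D :: real
  assumes K1: "K \<ge> 1" and lampos: "\<forall>i\<in>{1..K}. lam i > 0" and Psi: "Psi > 0" and rmin: "rmin \<ge> 0"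
    and rm: "\<forall>i\<in>{1..K}. rhomin i = (2 powr rmin - 1) * ((\<Sum>j\<in>{1..<i}. rhomin j) + Psi / lam i)"
    and nn: "\<forall>i\<in>{1..K}. rho i \<ge> 0"
    and ex1: "excess K rmin rhomin rho 1 = D"
    and exi: "\<forall>i\<in>{2..K}. excess K rmin rhomin rho i = 0"
    and D: "D \<ge> 0"
  shows "(\<forall>i\<in>{2..K}. rho i = (2 powr rmin - 1) * ((\<Sum>j\<in>{1..<i}. rho j) + Psi / lam i))
     \<and> (\<forall>i\<in>{2..K}. rU lam Psi rho i = rmin)
     \<and> rU lam Psi rho 1 - rmin = log 2 (1 + D * lam 1 / (Psi * 2 powr (real K * rmin)))"
proof -
  define a where "a = 2 powr rmin"
  define c where "c = a - 1"
  have a1: "a \<ge> 1" unfolding a_def using rmin by (intro ge_one_powr_ge_zero) auto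
  hence a0: "a > 0" by simp
  define Dl where "Dl = (\<lambda>j. rho j - rhomin j)"
  define e where "e = D / a ^ (K - 1)"
  have ex: "excess K rmin rhomin rho i = (Dl i - c * (\<Sum>j\<in>{1..<i}. Dl j)) * a ^ (K - i)"
    if "i \<le> K" for i
  proof -
    have "real K - real i = real (K - i)" using that by simp
    hence "2 powr ((real K - real i) * rmin) = a ^ (K - i)" unfolding a_def using pow_eq by metis
    thus ?thesis unfolding excess_def Dl_def c_def a_def by simp
  qed
  have S: "1 \<le> i \<longrightarrow> i \<le> K \<longrightarrow> (\<Sum>j\<in>{1..i}. Dl j) = a ^ (i - 1) * e" for i
  proof (induction i)
    case 0 then show ?case by simp
  next
    case (Suc i)
    show ?case
    proof (intro impI)
      assume h: "Suc i \<le> K"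
      show "(\<Sum>j\<in>{1..Suc i}. Dl j) = a ^ (Suc i - 1) * e"
      proof (cases "i = 0")
        case True
        have "excess K rmin rhomin rho 1 = Dl 1 * a ^ (K - 1)" using ex[of 1] K1 by simp
        hence "Dl 1 = e" using ex1 a0 unfolding e_def by (simp add: field_simps)
        then show ?thesis using True by simp
      next
        case False
        hence IH: "(\<Sum>j\<in>{1..i}. Dl j) = a ^ (i - 1) * e" using Suc.IH h by simp
        have "Suc i \<in> {2..K}" using False h by simp
        hence "(Dl (Suc i) - c * (\<Sum>j\<in>{1..<Suc i}. Dl j)) * a ^ (K - Suc i) = 0"
          using exi ex[of "Suc i"] h by simp
        moreover have se: "{1..<Suc i} = {1..i}" by auto
        ultimately have "(Dl (Suc i) - c * (\<Sum>j\<in>{1..i}. Dl j)) * a ^ (K - Suc i) = 0" by (simp only:)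
        hence "Dl (Suc i) = c * (\<Sum>j\<in>{1..i}. Dl j)" using a0 by simp
        hence "(\<Sum>j\<in>{1..Suc i}. Dl j) = a * (\<Sum>j\<in>{1..i}. Dl j)" unfolding c_def
          by (simp add: algebra_simps)
        also have "\<dots> = a ^ i * e" using IH False
          by (metis Suc_pred' mult.assoc neq0_conv power_Suc)
        finally show ?thesis by simp
      qed
    qed
  qed
  have rho_i: "rho i = c * ((\<Sum>j\<in>{1..<i}. rho j) + Psi / lam i)" if i: "i \<in> {2..K}" for i
  proof -
    obtain m where m: "i = Suc m" "m \<ge> 1" "m < K" using i by (cases i) auto
    have "(Dl i - c * (\<Sum>j\<in>{1..<i}. Dl j)) * a ^ (K - i) = 0"
      using exi ex[of i] i by simp
    hence d1: "Dl i = c * (\<Sum>j\<in>{1..<i}. Dl j)" using a0 by simp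
    have d2: "(\<Sum>j\<in>{1..<i}. Dl j) = (\<Sum>j\<in>{1..<i}. rho j) - (\<Sum>j\<in>{1..<i}. rhomin j)"
      unfolding Dl_def by (simp add: sum_subtractf)
    have d3: "rhomin i = c * ((\<Sum>j\<in>{1..<i}. rhomin j) + Psi / lam i)"
      using rm i unfolding c_def a_def by simp
    have "rho i = rhomin i + Dl i" unfolding Dl_def by simp
    also have "\<dots> = c * ((\<Sum>j\<in>{1..<i}. rhomin j) + Psi / lam i)
        + c * ((\<Sum>j\<in>{1..<i}. rho j) - (\<Sum>j\<in>{1..<i}. rhomin j))"
      unfolding d3 d1 d2 ..
    also have "\<dots> = c * ((\<Sum>j\<in>{1..<i}. rho j) + Psi / lam i)" by (simp add: algebra_simps)
    finally show ?thesis .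
  qed
  have rate_i: "rU lam Psi rho i = rmin" if i: "i \<in> {2..K}" for i
  proof -
    define s where "s = (\<Sum>j\<in>{1..<i}. rho j)"
    define N where "N = Psi / lam i"
    have lp: "lam i > 0" using lampos i by simp
    have s0: "s \<ge> 0" unfolding s_def using nn i by (intro sum_nonneg) auto
    have N0: "N > 0" unfolding N_def using lp Psi by simp
    have "rU lam Psi rho i = log 2 (s + rho i + N) - log 2 (s + N)"
      unfolding s_def N_def using nn i lp Psi by (intro rate_eq) auto
    also have "s + rho i + N = a * (s + N)"
    proof -
      have "rho i = c * (s + N)" using rho_i[OF i] unfolding s_def N_def .
      thus ?thesis unfolding c_def by (simp add: algebra_simps)
    qed
    also have "log 2 (a * (s + N)) = log 2 a + log 2 (s + N)"
      using a0 s0 N0 by (intro log_mult_pos) auto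
    finally show ?thesis unfolding a_def by simp
  qed
  have rate_1: "rU lam Psi rho 1 - rmin = log 2 (1 + D * lam 1 / (Psi * 2 powr (real K * rmin)))"
  proof -
    define N where "N = Psi / lam 1"
    have lp: "lam 1 > 0" using lampos K1 by simp
    have N0: "N > 0" unfolding N_def using lp Psi by simp
    have "Dl 1 = e" using S[of 1] K1 by simp
    moreover have "rhomin 1 = c * N" using rm K1 unfolding c_def a_def N_def by simp
    ultimately have r1: "rho 1 = c * N + e" unfolding Dl_def by simp
    have e0: "e \<ge> 0" unfolding e_def using D a0 by simp
    have "rU lam Psi rho 1 = log 2 (rho 1 + N) - log 2 N"
      using rate_eq[of lam 1 Psi rho] unfolding N_def using nn K1 lp Psi by simp
    also have "rho 1 + N = (a * N) * (1 + e / (a * N))"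
    proof -
      have "a * N \<noteq> 0" using a0 N0 by simp
      hence "(a * N) * (1 + e / (a * N)) = a * N + e" by (simp add: distrib_left)
      moreover have "rho 1 + N = a * N + e" using r1 unfolding c_def by (simp add: algebra_simps)
      ultimately show ?thesis by simp
    qed
    also have "log 2 \<dots> = log 2 a + log 2 N + log 2 (1 + e / (a * N))"
    proof -
      have "e / (a * N) \<ge> 0" using a0 N0 e0 by simp
      hence t0: "1 + e / (a * N) > 0" by linarith
      have "a * N > 0" using a0 N0 by simp
      hence "log 2 ((a * N) * (1 + e / (a * N))) = log 2 (a * N) + log 2 (1 + e / (a * N))"
        using t0 by (rule log_mult_pos)
      also have "log 2 (a * N) = log 2 a + log 2 N" using a0 N0 by (rule log_mult_pos)
      finally show ?thesis .
    qed
    finally have X: "rU lam Psi rho 1 = log 2 a + log 2 N + log 2 (1 + e / (a * N)) - log 2 N" .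
    have la: "log 2 a = rmin" unfolding a_def by simp
    from X la have "rU lam Psi rho 1 - rmin = log 2 (1 + e / (a * N))" by linarith
    moreover have "e / (a * N) = D * lam 1 / (Psi * 2 powr (real K * rmin))"
    proof -
      define q where "q = a ^ (K - 1)"
      have q0: "q > 0" unfolding q_def using a0 by simp
      have "a ^ K = a * q" unfolding q_def using K1 by (cases K) auto
      hence "2 powr (real K * rmin) = a * q" unfolding a_def pow_eq .
      moreover have "e / (a * N) = D * lam 1 / (Psi * (a * q))"
        unfolding e_def N_def q_def[symmetric] using a0 lp Psi q0 by (simp add: field_simps)
      ultimately show ?thesis by simp
    qed
    ultimately show ?thesis by simp
  qed
  show ?thesis using rho_i rate_i rate_1 unfolding c_def a_def by blast
qed



lemma upper:
  fixes K :: nat and lam rho rs :: "nat \<Rightarrow> real" and Psi rmin rhoU :: real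
  assumes K1: "K \<ge> 1" and mono: "\<forall>i\<in>{1..<K}. lam i \<ge> lam (Suc i)"
    and lampos: "\<forall>i\<in>{1..K}. lam i > 0" and Psi: "Psi > 0" and rmin: "rmin \<ge> 0"
    and feas: "feasible K lam Psi rmin rhoU rho"
    and rsnn: "\<forall>i\<in>{1..K}. rs i \<ge> 0" and rssum: "(\<Sum>i\<in>{1..K}. rs i) = rhoU"
    and rsi: "\<forall>i\<in>{2..K}. rs i = (2 powr rmin - 1) * ((\<Sum>j\<in>{1..<i}. rs j) + Psi / lam i)"
  shows "(\<Sum>i\<in>{1..K}. rU lam Psi rho i) \<le> (\<Sum>i\<in>{1..K}. rU lam Psi rs i)"
proof -
  define a where "a = 2 powr rmin"
  have a1: "a \<ge> 1" unfolding a_def using rmin by (intro ge_one_powr_ge_zero) auto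
  hence a0: "a > 0" by simp
  define N where "N = (\<lambda>i. Psi / lam i)"
  define x where "x = (\<lambda>f i. \<Sum>j\<in>{1..i}. (f :: nat \<Rightarrow> real) j)"
  define A where "A = (\<lambda>f i. log 2 (x f i + N i))"
  define B where "B = (\<lambda>f i. log 2 ((\<Sum>j\<in>{1..<i}. (f :: nat \<Rightarrow> real) j) + N i))"
  have rnn: "\<forall>i\<in>{1..K}. rho i \<ge> 0" and rsum: "(\<Sum>i\<in>{1..K}. rho i) = rhoU"
    and rrate: "\<forall>i\<in>{1..K}. rU lam Psi rho i \<ge> rmin"
    using feas unfolding feasible_def by auto
  have xsplit: "(\<Sum>j\<in>{1..<i}. f j) + f i = x f i" if i1: "i \<ge> 1" for f :: "nat \<Rightarrow> real" and i
  proof -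
    obtain m where "i = Suc m" using i1 by (cases i) auto
    thus ?thesis unfolding x_def by (simp add: atLeastLessThanSuc_atLeastAtMost)
  qed
  have tel: "(\<Sum>i\<in>{1..K}. rU lam Psi f i) = A f K - B f 1 + (\<Sum>i\<in>{1..<K}. A f i - B f (Suc i))"
    if fnn: "\<forall>i\<in>{1..K}. f i \<ge> 0" for f
  proof -
    have "(\<Sum>i\<in>{1..K}. rU lam Psi f i) = (\<Sum>i\<in>{1..K}. A f i - B f i)"
    proof (rule sum.cong)
      fix i assume i: "i \<in> {1..K}"
      have "rU lam Psi f i = log 2 ((\<Sum>j\<in>{1..<i}. f j) + f i + Psi / lam i)
           - log 2 ((\<Sum>j\<in>{1..<i}. f j) + Psi / lam i)"
        using i fnn lampos Psi by (intro rate_eq) auto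
      also have "\<dots> = A f i - B f i" unfolding A_def B_def N_def using xsplit[of i f] i by simp
      finally show "rU lam Psi f i = A f i - B f i" .
    qed simp
    also have "\<dots> = A f K - B f 1 + (\<Sum>i\<in>{1..<K}. A f i - B f (Suc i))"
      using K1 by (rule telescope)
    finally show ?thesis .
  qed
  have rsi': "x rs i + N i = a * (x rs (i - 1) + N i)" if i: "i \<in> {2..K}" for i
  proof -
    obtain m where m: "i = Suc m" "m \<ge> 1" using i by (cases i) auto
    have "x rs i = x rs m + rs i" unfolding x_def m(1) using m(2) by simp
    moreover have "rs i = (a - 1) * (x rs m + N i)"
      using rsi i unfolding a_def N_def x_def m(1) by (simp add: atLeastLessThanSuc_atLeastAtMost)
    ultimately show ?thesis using m(1) by (simp add: algebra_simps)
  qed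
  have dom: "d < K \<longrightarrow> x rho (K - d) \<le> x rs (K - d)" for d
  proof (induction d)
    case 0 show ?case using rsum rssum unfolding x_def by simp
  next
    case (Suc d)
    show ?case
    proof
      assume h: "Suc d < K"
      define m where "m = K - Suc d"
      have m1: "m \<ge> 1" and im: "K - d = Suc m" using h unfolding m_def by auto
      have IH: "x rho (Suc m) \<le> x rs (Suc m)" using Suc.IH h im by simp
      have iK: "Suc m \<in> {2..K}" using m1 im h by auto
      have lp: "lam (Suc m) > 0" using lampos iK by simp
      have xm0: "x rho m \<ge> 0" unfolding x_def using rnn m1 h m_def by (intro sum_nonneg) auto
      have N0: "N (Suc m) > 0" unfolding N_def using lp Psi by simp
      have "rU lam Psi rho (Suc m) = log 2 ((\<Sum>j\<in>{1..<Suc m}. rho j) + rho (Suc m) + Psi / lam (Suc m))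
           - log 2 ((\<Sum>j\<in>{1..<Suc m}. rho j) + Psi / lam (Suc m))"
        using iK rnn lp Psi by (intro rate_eq) auto
      also have "\<dots> = log 2 (x rho (Suc m) + N (Suc m)) - log 2 (x rho m + N (Suc m))"
        using xsplit[of "Suc m" rho] unfolding x_def N_def by (simp add: atLeastLessThanSuc_atLeastAtMost)
      also have "\<dots> = log 2 ((x rho (Suc m) + N (Suc m)) / (x rho m + N (Suc m)))"
      proof -
        have "x rho (Suc m) = x rho m + rho (Suc m)" unfolding x_def using m1 by simp
        moreover have "rho (Suc m) \<ge> 0" using rnn iK by auto
        ultimately have "x rho (Suc m) + N (Suc m) > 0" using xm0 N0 by linarith
        moreover have "x rho m + N (Suc m) > 0" using xm0 N0 by linarith
        ultimately show ?thesis by (simp add: log_divide_pos)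
      qed
      finally have eqr: "rU lam Psi rho (Suc m) = log 2 ((x rho (Suc m) + N (Suc m)) / (x rho m + N (Suc m)))" .
      have "Suc m \<in> {1..K}" using iK by auto
      hence "rmin \<le> rU lam Psi rho (Suc m)" using rrate by blast
      hence "rmin \<le> log 2 ((x rho (Suc m) + N (Suc m)) / (x rho m + N (Suc m)))" using eqr by simp
      moreover have "(x rho (Suc m) + N (Suc m)) / (x rho m + N (Suc m)) > 0"
      proof -
        have "x rho (Suc m) = x rho m + rho (Suc m)" unfolding x_def using m1 by simp
        moreover have "rho (Suc m) \<ge> 0" using rnn iK by auto
        ultimately show ?thesis using xm0 N0 by (intro divide_pos_pos) linarith+
      qed
      ultimately have "a \<le> (x rho (Suc m) + N (Suc m)) / (x rho m + N (Suc m))"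
        unfolding a_def by (simp add: le_log_iff)
      hence "a * (x rho m + N (Suc m)) \<le> x rho (Suc m) + N (Suc m)"
        using xm0 N0 by (simp add: pos_le_divide_eq)
      also have "\<dots> \<le> x rs (Suc m) + N (Suc m)" using IH by simp
      also have "\<dots> = a * (x rs m + N (Suc m))" using rsi'[OF iK] by simp
      finally have "x rho m \<le> x rs m" using a0 by simp
      thus "x rho (K - Suc d) \<le> x rs (K - Suc d)" unfolding m_def .
    qed
  qed
  have dom': "x rho i \<le> x rs i" if "i \<in> {1..K}" for i
    using dom[of "K - i"] that by simp
  have "(\<Sum>i\<in>{1..K}. rU lam Psi rho i) = A rho K - B rho 1 + (\<Sum>i\<in>{1..<K}. A rho i - B rho (Suc i))"
    using rnn by (rule tel)
  also have "\<dots> \<le> A rs K - B rs 1 + (\<Sum>i\<in>{1..<K}. A rs i - B rs (Suc i))"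
  proof -
    have "A rho K = A rs K" unfolding A_def x_def using rsum rssum by simp
    moreover have "B rho 1 = B rs 1" unfolding B_def by simp
    moreover have "(\<Sum>i\<in>{1..<K}. A rho i - B rho (Suc i)) \<le> (\<Sum>i\<in>{1..<K}. A rs i - B rs (Suc i))"
    proof (rule sum_mono)
      fix i assume i: "i \<in> {1..<K}"
      have eq: "A f i - B f (Suc i) = log 2 (x f i + N i) - log 2 (x f i + N (Suc i))" for f
        unfolding A_def B_def x_def by (simp add: atLeastLessThanSuc_atLeastAtMost)
      have "0 \<le> x rho i" unfolding x_def using rnn i by (intro sum_nonneg) auto
      moreover have "x rho i \<le> x rs i" using dom' i by simp
      moreover have "0 < N i" unfolding N_def using lampos Psi i by simp
      moreover have "N i \<le> N (Suc i)" unfolding N_def using lampos Psi mono i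
        by (intro divide_left_mono) auto
      ultimately show "A rho i - B rho (Suc i) \<le> A rs i - B rs (Suc i)"
        unfolding eq by (rule g_mono)
    qed
    ultimately show ?thesis by linarith
  qed
  also have "\<dots> = (\<Sum>i\<in>{1..K}. rU lam Psi rs i)" using rsnn by (rule tel[symmetric])
  finally show ?thesis .
qed



lemma sumV:
  fixes K :: nat and f :: "nat \<Rightarrow> real"
  assumes "K \<ge> 1" "f 1 - r = L" "\<forall>i\<in>{2..K}. f i = r"
  shows "(\<Sum>i\<in>{1..K}. f i) = real K * r + L"
proof -
  have "(\<Sum>i\<in>{1..K}. f i) = f 1 + (\<Sum>i\<in>{2..K}. f i)"
    using assms(1) by (simp add: sum.atLeast_Suc_atMost numeral_2_eq_2)
  also have "(\<Sum>i\<in>{2..K}. f i) = (\<Sum>i\<in>{2..K}. r)" using assms(3) by simp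
  also have "\<dots> = real (K - 1) * r" by simp
  also have "real (K - 1) = real K - 1" using assms(1) by simp
  finally show ?thesis using assms(2) by (simp add: algebra_simps)
qed

theorem proposition2:
  fixes K :: nat and lam rhomin :: "nat \<Rightarrow> real" and Psi rmin rhoU :: real
  assumes "K \<ge> 1"
    and "\<forall>i\<in>{1..<K}. lam i \<ge> lam (Suc i)"
    and "\<forall>i\<in>{1..K}. lam i > 0"
    and "Psi > 0" and "rmin \<ge> 0"
    and rhomin_def: "\<forall>i\<in>{1..K}. rhomin i = (2 powr rmin - 1) * ((\<Sum>j\<in>{1..<i}. rhomin j) + Psi / lam i)"
    and "rhoU \<ge> (\<Sum>i\<in>{1..K}. rhomin i)"
  defines "V \<equiv> real K * rmin +
      log 2 (1 + (rhoU - (\<Sum>i\<in>{1..K}. rhomin i)) * lam 1 / (Psi * 2 powr (real K * rmin)))"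
  shows "(\<exists>rho. feasible K lam Psi rmin rhoU rho \<and>
            excess K rmin rhomin rho 1 = rhoU - (\<Sum>i\<in>{1..K}. rhomin i) \<and>
            (\<forall>i\<in>{2..K}. excess K rmin rhomin rho i = 0))
       \<and> (\<forall>rho. feasible K lam Psi rmin rhoU rho \<and>
            excess K rmin rhomin rho 1 = rhoU - (\<Sum>i\<in>{1..K}. rhomin i) \<and>
            (\<forall>i\<in>{2..K}. excess K rmin rhomin rho i = 0) \<longrightarrow>
              (\<Sum>i\<in>{1..K}. rU lam Psi rho i) = V \<and>
              rU lam Psi rho 1 - rmin = log 2 (1 + (rhoU - (\<Sum>i\<in>{1..K}. rhomin i)) * lam 1 / (Psi * 2 powr (real K * rmin))) \<and>
              (\<forall>i\<in>{2..K}. rU lam Psi rho i = rmin))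
       \<and> (\<forall>rho. feasible K lam Psi rmin rhoU rho \<longrightarrow> (\<Sum>i\<in>{1..K}. rU lam Psi rho i) \<le> V)"
proof -
  note K1 = assms(1) and mono = assms(2) and lampos = assms(3) and Psi = assms(4) and rmin = assms(5)
    and rm = assms(6)
  define D where "D = rhoU - (\<Sum>i\<in>{1..K}. rhomin i)"
  have D0: "D \<ge> 0" unfolding D_def using assms(7) by simp
  define L where "L = log 2 (1 + D * lam 1 / (Psi * 2 powr (real K * rmin)))"
  have VL: "V = real K * rmin + L" unfolding V_def L_def D_def ..
  define a where "a = 2 powr rmin"
  have a1: "a \<ge> 1" unfolding a_def using rmin by (intro ge_one_powr_ge_zero) auto
  hence a0: "a > 0" by simp
  define e where "e = D / a ^ (K - 1)"
  have e0: "e \<ge> 0" unfolding e_def using D0 a0 by simp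
  define P where "P = (\<lambda>n::nat. if n = 0 then 0 else a ^ (n - 1) * e)"
  define rs where "rs = (\<lambda>i. rhomin i + (P i - P (i - 1)))"
  have rmnn: "i \<in> {1..K} \<longrightarrow> rhomin i \<ge> 0" for i
  proof (induction i rule: less_induct)
    case (less i)
    show ?case
    proof
      assume i: "i \<in> {1..K}"
      have "(\<Sum>j\<in>{1..<i}. rhomin j) \<ge> 0" using less i by (intro sum_nonneg) auto
      moreover have "Psi / lam i > 0" using lampos Psi i by simp
      moreover have "2 powr rmin - 1 \<ge> 0" using a1 unfolding a_def by simp
      ultimately show "rhomin i \<ge> 0" using rm i by simp
    qed
  qed
  have Pd: "P i - P (i - 1) \<ge> 0" for i
  proof (cases "i \<le> 1")
    case True then show ?thesis unfolding P_def using e0 by (cases i) auto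
  next
    case False
    define m where "m = i - 2"
    have m: "i = Suc (Suc m)" using False unfolding m_def by simp
    have "a ^ m * e \<le> a ^ Suc m * e" using a1 e0
      by (intro mult_right_mono) (auto simp: power_increasing)
    then show ?thesis unfolding P_def m by simp
  qed
  have Psum: "(\<Sum>j\<in>{1..i}. P j - P (j - 1)) = P i" for i
  proof (induction i)
    case 0 then show ?case by (simp add: P_def)
  next
    case (Suc i) then show ?case by (simp add: P_def)
  qed
  have rsnn: "\<forall>i\<in>{1..K}. rs i \<ge> 0" unfolding rs_def using rmnn Pd by (simp add: add_nonneg_nonneg)
  have "P K = D" unfolding P_def e_def using K1 a0 by simp
  have "(\<Sum>i\<in>{1..K}. rs i) = (\<Sum>i\<in>{1..K}. rhomin i) + (\<Sum>i\<in>{1..K}. P i - P (i - 1))"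
    unfolding rs_def by (rule sum.distrib)
  also have "\<dots> = (\<Sum>i\<in>{1..K}. rhomin i) + P K" unfolding Psum ..
  finally have rssum: "(\<Sum>i\<in>{1..K}. rs i) = rhoU" using \<open>P K = D\<close> unfolding D_def by simp
  have pw: "2 powr ((real K - real i) * rmin) = a ^ (K - i)" if "i \<le> K" for i
  proof -
    have "real K - real i = real (K - i)" using that by simp
    thus ?thesis unfolding a_def using pow_eq by metis
  qed
  have rsex: "excess K rmin rhomin rs i = ((P i - P (i - 1)) - (a - 1) * P (i - 1)) * a ^ (K - i)"
    if i: "i \<in> {1..K}" for i
  proof -
    have "(\<Sum>j\<in>{1..<i}. rs j - rhomin j) = (\<Sum>j\<in>{1..i - 1}. P j - P (j - 1))"
    proof -
      have "{1..<i} = {1..i - 1}" using i by auto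
      thus ?thesis unfolding rs_def by simp
    qed
    hence sf: "(\<Sum>j\<in>{1..<i}. rs j - rhomin j) = P (i - 1)" using Psum by simp
    have "rs i - rhomin i = P i - P (i - 1)" unfolding rs_def by simp
    moreover have "2 powr rmin = a" unfolding a_def ..
    moreover have "2 powr ((real K - real i) * rmin) = a ^ (K - i)" using pw[of i] i by simp
    ultimately show ?thesis unfolding excess_def sf by simp
  qed
  have rsex1: "excess K rmin rhomin rs 1 = D"
  proof -
    have "excess K rmin rhomin rs 1 = e * a ^ (K - 1)" using rsex[of 1] K1 unfolding P_def by simp
    also have "\<dots> = D" unfolding e_def using a0 by simp
    finally show ?thesis .
  qed
  have rsexi: "\<forall>i\<in>{2..K}. excess K rmin rhomin rs i = 0"
  proof
    fix i assume i: "i \<in> {2..K}"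
    define m where "m = i - 2"
    have m: "i = Suc (Suc m)" using i unfolding m_def by auto
    have "(P i - P (i - 1)) - (a - 1) * P (i - 1) = 0"
      unfolding P_def m by (simp add: algebra_simps)
    thus "excess K rmin rhomin rs i = 0" using rsex[of i] i by simp
  qed
  note optrs = opt[OF K1 lampos Psi rmin rm rsnn rsex1 rsexi D0]
  then have rsi: "\<forall>i\<in>{2..K}. rs i = (2 powr rmin - 1) * ((\<Sum>j\<in>{1..<i}. rs j) + Psi / lam i)"
    and rsr: "\<forall>i\<in>{2..K}. rU lam Psi rs i = rmin" and rs1: "rU lam Psi rs 1 - rmin = L"
    unfolding L_def by auto
  have L0: "L \<ge> 0"
  proof -
    have "lam 1 > 0" using lampos K1 by simp
    hence "D * lam 1 / (Psi * 2 powr (real K * rmin)) \<ge> 0" using D0 Psi by simp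
    thus ?thesis unfolding L_def by simp
  qed
  have rsfeas: "feasible K lam Psi rmin rhoU rs"
    unfolding feasible_def
  proof (intro conjI ballI)
    fix i assume i: "i \<in> {1..K}"
    show "0 \<le> rs i" using rsnn i by simp
    show "rmin \<le> rU lam Psi rs i"
    proof (cases "i = 1")
      case True then show ?thesis using rs1 L0 by simp
    next
      case False then show ?thesis using rsr i by simp
    qed
  qed (rule rssum)
  have rsV: "(\<Sum>i\<in>{1..K}. rU lam Psi rs i) = V" unfolding VL using sumV[OF K1 rs1 rsr] .
  show ?thesis
  proof (intro conjI allI impI)
    show "\<exists>rho. feasible K lam Psi rmin rhoU rho \<and>
            excess K rmin rhomin rho 1 = rhoU - (\<Sum>i\<in>{1..K}. rhomin i) \<and>
            (\<forall>i\<in>{2..K}. excess K rmin rhomin rho i = 0)"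
      using rsfeas rsex1 rsexi unfolding D_def by blast
  next
    fix rho assume h: "feasible K lam Psi rmin rhoU rho \<and>
            excess K rmin rhomin rho 1 = rhoU - (\<Sum>i\<in>{1..K}. rhomin i) \<and>
            (\<forall>i\<in>{2..K}. excess K rmin rhomin rho i = 0)"
    have nn: "\<forall>i\<in>{1..K}. rho i \<ge> 0" using h unfolding feasible_def by auto
    have e1: "excess K rmin rhomin rho 1 = D" using h unfolding D_def by simp
    have ei: "\<forall>i\<in>{2..K}. excess K rmin rhomin rho i = 0" using h by simp
    note o = opt[OF K1 lampos Psi rmin rm nn e1 ei D0]
    hence r1: "rU lam Psi rho 1 - rmin = L" and ri: "\<forall>i\<in>{2..K}. rU lam Psi rho i = rmin"
      unfolding L_def by auto
    show "(\<Sum>i\<in>{1..K}. rU lam Psi rho i) = V" unfolding VL using sumV[OF K1 r1 ri] .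
    show "rU lam Psi rho 1 - rmin = log 2 (1 + (rhoU - (\<Sum>i\<in>{1..K}. rhomin i)) * lam 1 / (Psi * 2 powr (real K * rmin)))"
      using r1 unfolding L_def D_def .
    show "\<forall>i\<in>{2..K}. rU lam Psi rho i = rmin" using ri .
  next
    fix rho assume f: "feasible K lam Psi rmin rhoU rho"
    have "(\<Sum>i\<in>{1..K}. rU lam Psi rho i) \<le> (\<Sum>i\<in>{1..K}. rU lam Psi rs i)"
      using upper[OF K1 mono lampos Psi rmin f rsnn rssum rsi] .
    thus "(\<Sum>i\<in>{1..K}. rU lam Psi rho i) \<le> V" using rsV by simp
  qed
qed

end
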